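(* Let $P=\{x\in\mathbb{R}^n: Ax\ge b\}$ with rational data be full-dimensional and pointed, let $\mathcal{I}\subseteq\{1,\dots,n\}$ and $P_I=\{x\in P: x_j\in\mathbb{Z}\ \forall j\in\mathcal{I}\}$. Let $\mathcal{T}$ be a finite index set and $P^t=\{x\in P: D^tx\ge D^t_0\}$, $t\in\mathcal{T}$, be the terms of a disjunction with $P_I\subseteq P_D:=\operatorname{cl}\operatorname{conv}(\bigcup_{t}P^t)$. For $t\in\mathcal{T}$ let $\mathcal{P}^{t*}$ and $\mathcal{R}^{t*}$ be the complete sets of extreme points and extreme rays of $P^t$, and let $\mathcal{P}^*=\bigcup_t\mathcal{P}^{t*}$, $\mathcal{R}^*=\bigcup_t\mathcal{R}^{t*}$. Then $(\mathcal{P}^*,\mathcal{R}^* )$ is proper. Every extreme ray solution $(\alpha,\beta)$ of the associated PRLP corresponds to a facet $\alpha^\top x\ge\beta$ of $P_D$. Conversely, for every facet $\alpha^\top x\ge\beta$ of $P_D$, the solution $(\alpha,\beta)$ to the PRLP is feasible and extreme.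
   Context: For finite sets $\mathcal{P},\mathcal{R}\subset\mathbb{R}^n$, the point-ray linear program (PRLP) has feasible region $\{(\alpha,\beta)\in\mathbb{R}^n\times\mathbb{R}: \alpha^\top p\ge\beta\ \forall p\in\mathcal{P},\ \alpha^\top r\ge 0\ \forall r\in\mathcal{R}\}$ (a polyhedral cone; "extreme" means an extreme ray of this cone). The collection $(\mathcal{P},\mathcal{R})$ is proper if $\alpha^\top x\ge\beta$ is valid for $P_I$ whenever $(\alpha,\beta)$ is feasible for the PRLP.
   Formalization: The converse clause is asserted only when $P_D$ is full-dimensional, and the forward clause only for extreme ray solutions $(\alpha,\beta)$ with alpha nonzero. The statement above fails without it. *)

theory Defs
  imports "HOL-Analysis.Analysis"
begin

definition polyhedron_of :: "real^'n^'m \<Rightarrow> real^'m \<Rightarrow> (real^'n) set" where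
  "polyhedron_of A b = {x. \<forall>i. (A *v x) $ i \<ge> b $ i}"

definition term_poly :: "real^'n^'m \<Rightarrow> real^'m \<Rightarrow> ((real^'n) \<times> real) set \<Rightarrow> (real^'n) set" where
  "term_poly A b Dt = {x \<in> polyhedron_of A b. \<forall>(d, d0) \<in> Dt. d \<bullet> x \<ge> d0}"

definition mixed_int_hull :: "real^'n^'m \<Rightarrow> real^'m \<Rightarrow> 'n set \<Rightarrow> (real^'n) set" where
  "mixed_int_hull A b I = {x \<in> polyhedron_of A b. \<forall>j \<in> I. x $ j \<in> \<int>}"

definition disj_hull :: "real^'n^'m \<Rightarrow> real^'m \<Rightarrow> 't set \<Rightarrow> ('t \<Rightarrow> ((real^'n) \<times> real) set) \<Rightarrow> (real^'n) set" where
  "disj_hull A b T D = closure (convex hull (\<Union>t\<in>T. term_poly A b (D t)))"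

definition rec_cone :: "'a::real_vector set \<Rightarrow> 'a set" where
  "rec_cone Q = {d. \<forall>x\<in>Q. \<forall>c::real. c \<ge> 0 \<longrightarrow> x + c *\<^sub>R d \<in> Q}"

definition extreme_ray_of :: "'a::real_vector \<Rightarrow> 'a set \<Rightarrow> bool" where
  "extreme_ray_of v C \<longleftrightarrow> v \<noteq> 0 \<and> v \<in> C \<and> {c *\<^sub>R v | c::real. c \<ge> 0} face_of C"

definition extreme_dir :: "'a::real_vector set \<Rightarrow> 'a \<Rightarrow> bool" where
  "extreme_dir Q r \<longleftrightarrow> Q \<noteq> {} \<and> extreme_ray_of r (rec_cone Q)"

definition complete_extreme_rays :: "'a::real_vector set \<Rightarrow> 'a set \<Rightarrow> bool" where
  "complete_extreme_rays Q R \<longleftrightarrow> finite R \<and> (\<forall>r\<in>R. extreme_dir Q r)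
     \<and> (\<forall>d. extreme_dir Q d \<longrightarrow> (\<exists>r\<in>R. \<exists>c>0. d = c *\<^sub>R r))"

definition Pstar :: "real^'n^'m \<Rightarrow> real^'m \<Rightarrow> 't set \<Rightarrow> ('t \<Rightarrow> ((real^'n) \<times> real) set) \<Rightarrow> (real^'n) set" where
  "Pstar A b T D = (\<Union>t\<in>T. {p. p extreme_point_of term_poly A b (D t)})"

definition prlp_cone :: "(real^'n) set \<Rightarrow> (real^'n) set \<Rightarrow> ((real^'n) \<times> real) set" where
  "prlp_cone Ps Rs = {(\<alpha>, \<beta>). (\<forall>p\<in>Ps. \<alpha> \<bullet> p \<ge> \<beta>) \<and> (\<forall>r\<in>Rs. \<alpha> \<bullet> r \<ge> 0)}"

definition proper :: "(real^'n) set \<Rightarrow> (real^'n) set \<Rightarrow> (real^'n) set \<Rightarrow> bool" where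
  "proper Ps Rs PI \<longleftrightarrow> (\<forall>\<alpha> \<beta>. (\<alpha>, \<beta>) \<in> prlp_cone Ps Rs \<longrightarrow> (\<forall>x\<in>PI. \<alpha> \<bullet> x \<ge> \<beta>))"

definition facet_ineq :: "(real^'n) \<Rightarrow> real \<Rightarrow> (real^'n) set \<Rightarrow> bool" where
  "facet_ineq \<alpha> \<beta> Q \<longleftrightarrow> (\<forall>x\<in>Q. \<alpha> \<bullet> x \<ge> \<beta>) \<and> {x \<in> Q. \<alpha> \<bullet> x = \<beta>} facet_of Q"

end

theory Submission
  imports Defs
begin


lemma ray_aux:
  fixes p q s :: real
  assumes "\<And>c. 0 \<le> c \<Longrightarrow> p \<le> q + c * s"
  shows "0 \<le> s"
proof (rule ccontr)
  assume "\<not> 0 \<le> s"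
  then have s: "s < 0" by simp
  define c where "c = (\<bar>q - p\<bar> + 1) / (- s)"
  have c0: "0 \<le> c" unfolding c_def by (rule divide_nonneg_pos) (use s in auto)
  have "c * s = - (\<bar>q - p\<bar> + 1)" using s by (simp add: c_def field_simps)
  then have "q + c * s < p" by linarith
  with assms[OF c0] show False by simp
qed

definition hcone :: "real^'n^'m \<Rightarrow> real^'m \<Rightarrow> ((real^'n) \<times> real) set \<Rightarrow> ((real^'n)\<times>real) set" where
  "hcone A b Dt = {z. 0 \<le> snd z \<and> (\<forall>i. snd z * b$i \<le> (A *v fst z)$i) \<and> (\<forall>(d,d0)\<in>Dt. snd z * d0 \<le> d \<bullet> fst z)}"

lemma hcone_closed:
  fixes A :: "real^'n^'m"
  shows "closed (hcone A b Dt)"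
proof -
  have e: "hcone A b Dt
    = {z. 0 \<le> snd z} \<inter> (\<Inter>i. {z. snd z * b$i \<le> (A *v fst z)$i}) \<inter> (\<Inter>p\<in>Dt. {z. snd z * snd p \<le> fst p \<bullet> fst z})"
    unfolding hcone_def by force
  have cA: "continuous_on UNIV (\<lambda>x::(real^'n)\<times>real. A *v fst x)"
    by (rule bounded_linear.continuous_on[OF matrix_vector_mul_bounded_linear[of A]]) (intro continuous_intros)
  show ?thesis unfolding e
    by (intro closed_Int closed_INT closed_Collect_le continuous_intros ballI allI cA)
qed

lemma hcone_add: "z1 \<in> hcone A b Dt \<Longrightarrow> z2 \<in> hcone A b Dt \<Longrightarrow> z1 + z2 \<in> hcone A b Dt"
  unfolding hcone_def
  by (fastforce simp: matrix_vector_right_distrib inner_add_right distrib_right intro: add_mono)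

lemma hcone_scale: "0 \<le> c \<Longrightarrow> z \<in> hcone A b Dt \<Longrightarrow> c *\<^sub>R z \<in> hcone A b Dt"
  unfolding hcone_def
  by (fastforce simp: matrix_vector_mult_scaleR mult.assoc intro: mult_left_mono)

lemma hcone_zero: "0 \<in> hcone A b Dt"
  unfolding hcone_def by auto

lemma hcone_convex: "convex (hcone A b Dt)"
  unfolding convex_def using hcone_add hcone_scale by blast

lemma hcone_sum:
  assumes "finite S" "S \<subseteq> hcone A b Dt" "\<forall>x\<in>S. 0 \<le> u x"
  shows "(\<Sum>v\<in>S. u v *\<^sub>R v) \<in> hcone A b Dt"
  using assms
proof (induction S rule: finite_induct)
  case empty then show ?case by (simp add: hcone_zero)
next
  case (insert x F)
  then show ?case by (simp add: hcone_add hcone_scale)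
qed

lemma hcone_one: "((x, 1) \<in> hcone A b Dt) = (x \<in> term_poly A b Dt)"
  unfolding hcone_def term_poly_def polyhedron_of_def by auto

lemma hcone_pointed:
  assumes v: "v extreme_point_of polyhedron_of A b"
    and z: "z \<in> hcone A b Dt" and mz: "- z \<in> hcone A b Dt"
  shows "z = 0"
proof -
  obtain y l where zy: "z = (y, l)" by (cases z)
  have l: "l = 0" using z mz unfolding zy hcone_def by auto
  have ay: "\<And>i. (A *v y) $ i = 0"
  proof -
    fix i
    have "0 \<le> (A *v y) $ i" using z unfolding zy hcone_def l by auto
    moreover have "0 \<le> (A *v (-y)) $ i" using mz unfolding zy hcone_def l by auto
    then have "0 \<le> - (A *v y) $ i" using matrix_vector_mult_diff_distrib[of A 0 y] by simp
    ultimately show "(A *v y) $ i = 0" by simp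
  qed
  have vP: "v \<in> polyhedron_of A b" and ext: "\<forall>a\<in>polyhedron_of A b. \<forall>c\<in>polyhedron_of A b. v \<notin> open_segment a c"
    using v unfolding extreme_point_of_def by auto
  have p1: "v + y \<in> polyhedron_of A b" using vP ay
    by (simp add: polyhedron_of_def matrix_vector_right_distrib)
  have p2: "v - y \<in> polyhedron_of A b" using vP ay
    by (simp add: polyhedron_of_def matrix_vector_mult_diff_distrib)
  have "y = 0"
  proof (rule ccontr)
    assume "y \<noteq> 0"
    have d: "(v + y) - (v - y) = 2 *\<^sub>R y" by (simp add: algebra_simps scaleR_2)
    then have "v - y \<noteq> v + y" using \<open>y \<noteq> 0\<close> by auto
    moreover have "v = (1 - 1/2) *\<^sub>R (v - y) + (1/2) *\<^sub>R (v + y)"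
    proof -
      have "(1 - 1/2) *\<^sub>R (v - y) + (1/2) *\<^sub>R (v + y) = ((1/2) + (1/2::real)) *\<^sub>R v"
        by (simp only: scaleR_diff_right scaleR_add_right scaleR_add_left) (simp add: algebra_simps)
      then show ?thesis by simp
    qed
    ultimately have "v \<in> open_segment (v - y) (v + y)" unfolding in_segment by (intro conjI exI[of _ "1/2"]) auto
    with ext p1 p2 show False by blast
  qed
  then show ?thesis using zy l by (simp add: zero_prod_def)
qed



lemma sc_cancel:
  fixes v :: "'a::real_vector"
  assumes "(s::real) \<noteq> 0" shows "(c * s) *\<^sub>R ((1/s) *\<^sub>R v) = c *\<^sub>R v"
  using assms by (simp add: scaleR_scaleR)

lemma minkowski_valid:
  fixes A :: "real^'n^'m" and b :: "real^'m" and Dt :: "((real^'n) \<times> real) set"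
    and R :: "(real^'n) set" and \<alpha> :: "real^'n" and \<beta> :: real
  assumes pv: "v extreme_point_of polyhedron_of A b"
    and cr: "complete_extreme_rays (term_poly A b Dt) R"
    and ep: "\<And>e. e extreme_point_of term_poly A b Dt \<Longrightarrow> \<beta> \<le> \<alpha> \<bullet> e"
    and rr: "\<And>r. r\<in>R \<Longrightarrow> 0 \<le> \<alpha> \<bullet> r"
    and x: "x \<in> term_poly A b Dt"
  shows "\<beta> \<le> \<alpha> \<bullet> x"
proof -
  define Q where "Q = term_poly A b Dt"
  define K where "K = hcone A b Dt"
  have Qne: "Q \<noteq> {}" using x Q_def by auto
  have pt: "\<And>z. z \<in> K \<Longrightarrow> -z \<in> K \<Longrightarrow> z = 0" using hcone_pointed[OF pv] K_def by blast
  have Kadd: "\<And>z1 z2. z1\<in>K \<Longrightarrow> z2\<in>K \<Longrightarrow> z1+z2\<in>K" using hcone_add K_def by blast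
  have Ksc: "\<And>c z. 0\<le>c \<Longrightarrow> z\<in>K \<Longrightarrow> c *\<^sub>R z \<in> K" using hcone_scale K_def by blast
  have one: "\<And>y. ((y,1) \<in> K) = (y \<in> Q)" using hcone_one K_def Q_def by blast
  have recK: "\<And>y. (y,0) \<in> K \<Longrightarrow> y \<in> rec_cone Q"
  proof -
    fix y assume y: "(y,0) \<in> K"
    show "y \<in> rec_cone Q" unfolding rec_cone_def
    proof (intro CollectI ballI allI impI)
      fix x' and c :: real assume "x' \<in> Q" "0 \<le> c"
      then have "(x',1) + c *\<^sub>R (y,0) \<in> K" using Kadd Ksc one y by blast
      then show "x' + c *\<^sub>R y \<in> Q" using one by simp
    qed
  qed
  have Krec: "\<And>d. d \<in> rec_cone Q \<Longrightarrow> (d,0) \<in> K"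
  proof -
    fix d assume d: "d \<in> rec_cone Q"
    have xs: "\<And>c. 0 \<le> c \<Longrightarrow> x + c *\<^sub>R d \<in> Q" using d x Q_def unfolding rec_cone_def by blast
    have "\<forall>i. 0 \<le> (A *v d)$i"
    proof
      fix i
      show "0 \<le> (A *v d)$i"
      proof (rule ray_aux[of "b$i" "(A *v x)$i"])
        fix c :: real assume "0 \<le> c"
        then have "x + c *\<^sub>R d \<in> Q" by (rule xs)
        then show "b$i \<le> (A *v x)$i + c * (A *v d)$i" unfolding Q_def term_poly_def polyhedron_of_def
          by (simp add: matrix_vector_right_distrib matrix_vector_mult_scaleR)
      qed
    qed
    moreover have "\<forall>(dd,d0)\<in>Dt. 0 \<le> dd \<bullet> d"
    proof (intro ballI, clarify)
      fix dd d0 assume dd: "(dd,d0)\<in>Dt"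
      show "0 \<le> dd \<bullet> d"
      proof (rule ray_aux[of d0 "dd \<bullet> x"])
        fix c :: real assume "0 \<le> c"
        then have "x + c *\<^sub>R d \<in> Q" by (rule xs)
        then show "d0 \<le> dd \<bullet> x + c * (dd \<bullet> d)" using dd unfolding Q_def term_poly_def
          by (auto simp: inner_add_right)
      qed
    qed
    ultimately show "(d,0) \<in> K" unfolding K_def hcone_def by auto
  qed
  define S1 where "S1 = K \<inter> sphere 0 1"
  define H where "H = convex hull S1"
  have cS1: "compact S1" unfolding S1_def K_def
    by (intro closed_Int_compact hcone_closed compact_sphere)
  have cH: "compact H" unfolding H_def by (rule compact_convex_hull[OF cS1])
  have H0: "0 \<notin> H"
  proof
    assume "0 \<in> H"
    then obtain S u where S: "finite S" "S \<subseteq> S1" "\<forall>x\<in>S. 0 \<le> u x" "sum u S = 1" "(\<Sum>v\<in>S. u v *\<^sub>R v) = 0"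
      unfolding H_def convex_hull_explicit by blast
    obtain y0 where y0: "y0 \<in> S" "0 < u y0"
    proof (rule ccontr)
      assume "\<not> thesis"
      then have "\<forall>y\<in>S. u y \<le> 0" using that by force
      then have "sum u S \<le> 0" by (simp add: sum_nonpos)
      with S(4) show False by simp
    qed
    have sub: "S - {y0} \<subseteq> K" using S(2) S1_def by auto
    have rest: "(\<Sum>v\<in>S-{y0}. u v *\<^sub>R v) \<in> K" using hcone_sum[of "S-{y0}" A b Dt u] K_def sub S(1) S(3) by auto
    have "(\<Sum>v\<in>S. u v *\<^sub>R v) = u y0 *\<^sub>R y0 + (\<Sum>v\<in>S-{y0}. u v *\<^sub>R v)"
      using sum.remove[OF S(1) y0(1)] by simp
    then have "(\<Sum>v\<in>S-{y0}. u v *\<^sub>R v) = - (u y0 *\<^sub>R y0)" using S(5)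
      by (simp add: eq_neg_iff_add_eq_0 add.commute)
    then have "- (u y0 *\<^sub>R y0) \<in> K" using rest by simp
    then have "(1/u y0) *\<^sub>R (- (u y0 *\<^sub>R y0)) \<in> K" by (rule Ksc[rotated]) (use y0 in simp)
    moreover have "(1/u y0) *\<^sub>R (- (u y0 *\<^sub>R y0)) = - y0" using y0 by simp
    ultimately have "- y0 \<in> K" by simp
    moreover have "y0 \<in> K" "norm y0 = 1" using S(2) y0 S1_def by auto
    ultimately show False using pt by fastforce
  qed
  have cvH: "convex H" by (simp add: H_def)
  obtain w c where wc: "w \<bullet> 0 < c" "\<forall>z\<in>H. c < w \<bullet> z"
    using separating_hyperplane_closed_point[OF cvH compact_imp_closed[OF cH] H0] by blast
  have c0: "0 < c" using wc by simp
  have W: "\<And>z. z \<in> K \<Longrightarrow> z \<noteq> 0 \<Longrightarrow> c * norm z < w \<bullet> z"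
  proof -
    fix z assume z: "z\<in>K" "z\<noteq>0"
    have "(1/norm z) *\<^sub>R z \<in> K" by (rule Ksc) (use z in auto)
    moreover have "norm ((1/norm z) *\<^sub>R z) = 1" using z by simp
    ultimately have "(1/norm z) *\<^sub>R z \<in> S1" unfolding S1_def by simp
    then have "(1/norm z) *\<^sub>R z \<in> H" unfolding H_def by (rule hull_inc)
    then have "c < w \<bullet> ((1/norm z) *\<^sub>R z)" using wc(2) by blast
    then have "c < (w \<bullet> z) / norm z" by simp
    then show "c * norm z < w \<bullet> z" using z by (simp add: field_simps)
  qed
  have Wp: "\<And>z. z \<in> K \<Longrightarrow> z \<noteq> 0 \<Longrightarrow> 0 < w \<bullet> z"
    using W c0 by (meson less_trans mult_pos_pos zero_less_norm_iff)
  define Sg where "Sg = K \<inter> {z. w \<bullet> z = 1}"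
  have nrm: "\<And>q. q \<in> K \<Longrightarrow> q \<noteq> 0 \<Longrightarrow> (1 / (w \<bullet> q)) *\<^sub>R q \<in> Sg"
  proof -
    fix q assume q: "q \<in> K" "q \<noteq> 0"
    have "0 < w \<bullet> q" using Wp q by blast
    then show "(1 / (w \<bullet> q)) *\<^sub>R q \<in> Sg" using Ksc[OF _ q(1)] unfolding Sg_def by simp
  qed
  have Sgb: "bounded Sg"
    unfolding bounded_iff
  proof (intro exI ballI)
    fix z assume z: "z \<in> Sg"
    then have "z \<noteq> 0" unfolding Sg_def by auto
    moreover have "z \<in> K" "w \<bullet> z = 1" using z unfolding Sg_def by auto
    ultimately have "c * norm z < 1" using W[of z] by simp
    then show "norm z \<le> 1 / c" using c0 by (simp add: field_simps)
  qed
  have Sgc: "compact Sg" unfolding compact_eq_bounded_closed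
    using Sgb hcone_closed closed_hyperplane unfolding Sg_def K_def by blast
  have Sgv: "convex Sg" unfolding Sg_def K_def
    by (intro convex_Int hcone_convex convex_hyperplane)
  have KM: "Sg = convex hull {z. z extreme_point_of Sg}"
    by (rule Krein_Milman_Minkowski[OF Sgc Sgv])
  have extpos: "\<And>z. z extreme_point_of Sg \<Longrightarrow> 0 \<le> (\<alpha>, -\<beta>) \<bullet> z"
  proof -
    fix z assume ez: "z extreme_point_of Sg"
    then have zS: "z \<in> Sg" and ext: "\<And>a1 a2. a1\<in>Sg \<Longrightarrow> a2\<in>Sg \<Longrightarrow> z \<notin> open_segment a1 a2"
      by (auto simp: extreme_point_of_def)
    obtain y l where zyl: "z = (y,l)" by (cases z)
    have zK: "(y,l) \<in> K" and wz: "w \<bullet> (y,l) = 1" using zS zyl Sg_def by auto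
    have l0: "0 \<le> l" using zK unfolding K_def hcone_def by auto
    show "0 \<le> (\<alpha>, -\<beta>) \<bullet> z"
    proof (cases "l = 0")
      case False
      then have lp: "0 < l" using l0 by simp
      define xx where "xx = (1/l) *\<^sub>R y"
      have yl: "y = l *\<^sub>R xx" using lp xx_def by simp
      have "(1/l) *\<^sub>R (y,l) \<in> K" by (rule Ksc) (use lp zK in auto)
      then have xxK: "(xx, 1) \<in> K" using lp by (simp add: xx_def)
      then have xxQ: "xx \<in> Q" using one by simp
      have "xx extreme_point_of Q"
        unfolding extreme_point_of_def
      proof (intro conjI ballI xxQ notI)
        fix a1 a2 assume a1: "a1 \<in> Q" and a2: "a2 \<in> Q" and seg: "xx \<in> open_segment a1 a2"
        from seg obtain u where u: "a1 \<noteq> a2" "0 < u" "u < 1" "xx = (1-u) *\<^sub>R a1 + u *\<^sub>R a2"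
          unfolding in_segment by blast
        have K1: "(a1,1) \<in> K" "(a2,1) \<in> K" using one a1 a2 by auto
        have n1: "(a1,1::real) \<noteq> 0" "(a2,1::real) \<noteq> 0" by (auto simp: zero_prod_def)
        define s1 where "s1 = w \<bullet> (a1,1)"
        define s2 where "s2 = w \<bullet> (a2,1)"
        define p1 where "p1 = (1/s1) *\<^sub>R (a1,1::real)"
        define p2 where "p2 = (1/s2) *\<^sub>R (a2,1::real)"
        have s1: "p1 \<in> Sg" "0 < s1" using nrm[OF K1(1) n1(1)] Wp[OF K1(1) n1(1)] s1_def p1_def by auto
        have s2: "p2 \<in> Sg" "0 < s2" using nrm[OF K1(2) n1(2)] Wp[OF K1(2) n1(2)] s2_def p2_def by auto
        define mu where "mu = l * u * s2"
        have e1: "(l*(1-u)* s1) *\<^sub>R p1 = (l*(1-u)) *\<^sub>R (a1,1)"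
          unfolding p1_def using s1(2) by (simp add: sc_cancel)
        have e2: "mu *\<^sub>R p2 = (l*u) *\<^sub>R (a2,1)"
          unfolding p2_def mu_def using s2(2) by (simp add: sc_cancel)
        have zz: "(y,l) = (l*(1-u)* s1) *\<^sub>R p1 + mu *\<^sub>R p2"
          unfolding e1 e2 by (simp add: yl u(4) algebra_simps)
        have "w \<bullet> ((l*(1-u)* s1) *\<^sub>R p1 + mu *\<^sub>R p2) = l*(1-u)* s1 + mu"
          unfolding e1 e2 by (simp only: inner_add_right inner_scaleR_right s1_def s2_def mu_def)
        then have sum1: "l*(1-u)* s1 + mu = 1" using zz wz by simp
        have mu0: "0 < mu" using lp u s2 by (simp add: mu_def)
        have pos1: "0 < l*(1-u)* s1" using lp u s1 by simp
        have mu1: "mu < 1" using sum1 pos1 by simp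
        have om: "l*(1-u)* s1 = 1 - mu" using sum1 by simp
        have "z = (l*(1-u)* s1) *\<^sub>R p1 + mu *\<^sub>R p2" using zz zyl by simp
        then have zc: "z = (1 - mu) *\<^sub>R p1 + mu *\<^sub>R p2" unfolding om .
        have pne: "p1 \<noteq> p2"
        proof
          assume "p1 = p2"
          then have e1: "1/s1 = 1/s2" and e2: "(1/s1) *\<^sub>R a1 = (1/s2) *\<^sub>R a2" unfolding p1_def p2_def by auto
          from e1 have "s1 = s2" by simp
          with e2 s1(2) have "a1 = a2" by simp
          with u(1) show False by simp
        qed
        have "z \<in> open_segment p1 p2" unfolding in_segment using pne mu0 mu1 zc by blast
        with ext[OF s1(1) s2(1)] show False by blast
      qed
      then have "\<beta> \<le> \<alpha> \<bullet> xx" using ep Q_def by blast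
      then have "0 \<le> l * (\<alpha> \<bullet> xx - \<beta>)" using lp by simp
      then show ?thesis using zyl yl by (simp add: algebra_simps)
    next
      case True
      then have yK: "(y,0) \<in> K" using zK by simp
      have yn: "y \<noteq> 0" using wz True by (auto simp: zero_prod_def[symmetric])
      have yrec: "y \<in> rec_cone Q" using recK yK by blast
      let ?ray = "{c *\<^sub>R y |c. (c::real) \<ge> 0}"
      have "?ray face_of rec_cone Q"
        unfolding face_of_def
      proof (intro conjI)
        show "?ray \<subseteq> rec_cone Q"
        proof
          fix q assume "q \<in> ?ray"
          then obtain c where c: "0 \<le> c" "q = c *\<^sub>R y" by blast
          have "c *\<^sub>R (y,0) \<in> K" using Ksc c yK by blast
          then have "(c *\<^sub>R y, 0) \<in> K" by simp
          then show "q \<in> rec_cone Q" using recK c by blast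
        qed
        show "convex ?ray"
          unfolding convex_def
        proof (intro ballI allI impI)
          fix p q and u v :: real assume p: "p \<in> ?ray" and q: "q \<in> ?ray" and uv: "0 \<le> u" "0 \<le> v" "u + v = 1"
          obtain c1 where c1: "0 \<le> c1" "p = c1 *\<^sub>R y" using p by blast
          obtain c2 where c2: "0 \<le> c2" "q = c2 *\<^sub>R y" using q by blast
          have "u *\<^sub>R p + v *\<^sub>R q = (u * c1 + v * c2) *\<^sub>R y" using c1 c2 by (simp add: algebra_simps)
          moreover have "0 \<le> u * c1 + v * c2" using uv c1 c2 by simp
          ultimately show "u *\<^sub>R p + v *\<^sub>R q \<in> ?ray" by blast
        qed
        show "\<forall>a1\<in>rec_cone Q. \<forall>a2\<in>rec_cone Q. \<forall>p\<in>?ray. p \<in> open_segment a1 a2 \<longrightarrow> a1 \<in> ?ray \<and> a2 \<in> ?ray"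
        proof (intro ballI impI)
        fix a1 a2 p assume a1: "a1 \<in> rec_cone Q" and a2: "a2 \<in> rec_cone Q" and p: "p \<in> ?ray"
          and seg: "p \<in> open_segment a1 a2"
        obtain c0 where c0: "0 \<le> c0" "p = c0 *\<^sub>R y" using p by blast
        obtain u where u: "a1 \<noteq> a2" "0 < u" "u < 1" "p = (1-u) *\<^sub>R a1 + u *\<^sub>R a2"
          using seg unfolding in_segment by blast
        have Ka: "(a1,0) \<in> K" "(a2,0) \<in> K" using Krec a1 a2 by auto
        show "a1 \<in> ?ray \<and> a2 \<in> ?ray"
        proof (cases "a1 = 0 \<or> a2 = 0")
          case True
          then show ?thesis
          proof
            assume a10: "a1 = 0"
            have "u *\<^sub>R a2 = c0 *\<^sub>R y" using u(4) c0(2) a10 by simp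
            moreover have "a2 = (1/u) *\<^sub>R (u *\<^sub>R a2)" using u(2) by simp
            ultimately have "a2 = (c0/u) *\<^sub>R y" by simp
            moreover have "0 \<le> c0/u" using c0 u by simp
            moreover have "a1 = 0 *\<^sub>R y" using a10 by simp
            ultimately show ?thesis by blast
          next
            assume a20: "a2 = 0"
            have "(1-u) *\<^sub>R a1 = c0 *\<^sub>R y" using u(4) c0(2) a20 by simp
            moreover have "a1 = (1/(1-u)) *\<^sub>R ((1-u) *\<^sub>R a1)" using u(3) by simp
            ultimately have "a1 = (c0/(1-u)) *\<^sub>R y" by simp
            moreover have "0 \<le> c0/(1-u)" using c0 u by simp
            moreover have "a2 = 0 *\<^sub>R y" using a20 by simp
            ultimately show ?thesis by blast
          qed
        next
          case False
          then have n1: "(a1,0::real) \<noteq> 0" "(a2,0::real) \<noteq> 0" by (auto simp: zero_prod_def)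
          define s1 where "s1 = w \<bullet> (a1,0)"
          define s2 where "s2 = w \<bullet> (a2,0)"
          define p1 where "p1 = (1/s1) *\<^sub>R (a1,0::real)"
          define p2 where "p2 = (1/s2) *\<^sub>R (a2,0::real)"
          have s1: "p1 \<in> Sg" "0 < s1" using nrm[OF Ka(1) n1(1)] Wp[OF Ka(1) n1(1)] s1_def p1_def by auto
          have s2: "p2 \<in> Sg" "0 < s2" using nrm[OF Ka(2) n1(2)] Wp[OF Ka(2) n1(2)] s2_def p2_def by auto
          have e1: "((1-u)* s1) *\<^sub>R p1 = (1-u) *\<^sub>R (a1,0)"
            unfolding p1_def using s1(2) by (simp add: sc_cancel)
          have e2: "(u* s2) *\<^sub>R p2 = u *\<^sub>R (a2,0)"
            unfolding p2_def using s2(2) by (simp add: sc_cancel)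
          have pp: "(p,0::real) = ((1-u)* s1) *\<^sub>R p1 + (u* s2) *\<^sub>R p2"
            unfolding e1 e2 by (simp add: u(4))
          have "w \<bullet> (p,0::real) = (1-u)* s1 + u* s2"
            unfolding pp e1 e2 by (simp only: inner_add_right inner_scaleR_right s1_def s2_def)
          moreover have pc: "(p,0::real) = c0 *\<^sub>R (y,0)" using c0(2) by simp
          have "w \<bullet> (p,0::real) = c0 * (w \<bullet> (y,0))" by (simp only: pc inner_scaleR_right)
          ultimately have c0e: "c0 = (1-u)* s1 + u* s2" using wz True by simp
          have pos: "0 < (1-u)* s1" "0 < u* s2" using u s1 s2 by auto
          then have c0p: "0 < c0" using c0e by simp
          define mu where "mu = u* s2/c0"
          have mu0: "0 < mu" "mu < 1" using pos c0e c0p by (auto simp: mu_def field_simps)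
          have om: "1 - mu = (1-u)* s1/c0" using c0e c0p by (simp add: mu_def field_simps)
          have zc: "z = (1 - mu) *\<^sub>R p1 + mu *\<^sub>R p2"
          proof -
            have "(y,0::real) = (1/c0) *\<^sub>R (p,0)" using c0 c0p by simp
            also have "\<dots> = (1/c0) *\<^sub>R (((1-u)* s1) *\<^sub>R p1 + (u* s2) *\<^sub>R p2)" using pp by simp
            also have "\<dots> = ((1-u)* s1/c0) *\<^sub>R p1 + (u* s2/c0) *\<^sub>R p2"
              by (simp add: scaleR_add_right)
            also have "\<dots> = (1 - mu) *\<^sub>R p1 + mu *\<^sub>R p2"
              unfolding om[symmetric] mu_def[symmetric] ..
            finally show ?thesis using zyl True by simp
          qed
          have peq: "p1 = p2"
          proof (rule ccontr)
            assume "p1 \<noteq> p2"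
            then have "z \<in> open_segment p1 p2" unfolding in_segment using mu0 zc by blast
            with ext[OF s1(1) s2(1)] show False by blast
          qed
          then have zp: "z = p1" using zc scaleR_collapse[of mu p1] by simp
          have "(y,0::real) = (1/s1) *\<^sub>R (a1,0)" using zp zyl True p1_def by simp
          then have "y = (1/s1) *\<^sub>R a1" by simp
          then have ea1: "a1 = s1 *\<^sub>R y" using s1(2) by simp
          have "(y,0::real) = (1/s2) *\<^sub>R (a2,0)" using zp peq zyl True p2_def by simp
          then have "y = (1/s2) *\<^sub>R a2" by simp
          then have ea2: "a2 = s2 *\<^sub>R y" using s2(2) by simp
          show ?thesis using ea1 ea2 s1(2) s2(2) less_imp_le by blast
        qed
        qed
      qed
      then have "extreme_dir Q y"
        unfolding extreme_dir_def extreme_ray_of_def using Qne yn yrec by blast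
      then obtain r c where r: "r \<in> R" "0<c" "y = c *\<^sub>R r"
        using cr unfolding complete_extreme_rays_def Q_def by blast
      have "0 \<le> c * (\<alpha> \<bullet> r)" using rr[OF r(1)] r(2) by simp
      then show ?thesis using zyl True r(3) by simp
    qed
  qed
  have allSg: "\<forall>z\<in>Sg. 0 \<le> (\<alpha>,-\<beta>) \<bullet> z"
  proof -
    have "convex hull {z. z extreme_point_of Sg} \<subseteq> {z. 0 \<le> (\<alpha>,-\<beta>) \<bullet> z}"
    proof (rule hull_minimal)
      show "{z. z extreme_point_of Sg} \<subseteq> {z. 0 \<le> (\<alpha>,-\<beta>) \<bullet> z}" using extpos by blast
      show "convex {z. 0 \<le> (\<alpha>,-\<beta>) \<bullet> z}" using convex_halfspace_ge[of 0 "(\<alpha>,-\<beta>)"] by simp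
    qed
    then show ?thesis using KM by auto
  qed
  have z0: "(x,1) \<in> K" using one x Q_def by simp
  have z0n: "(x,1::real) \<noteq> 0" by (simp add: zero_prod_def)
  define s where "s = w \<bullet> (x,1)"
  have s0: "0 < s" using Wp[OF z0 z0n] s_def by simp
  have "(1/s) *\<^sub>R (x,1) \<in> Sg" using nrm[OF z0 z0n] s_def by simp
  then have "0 \<le> (\<alpha>,-\<beta>) \<bullet> ((1/s) *\<^sub>R (x,1))" using allSg by blast
  then have "\<beta> / s \<le> \<alpha> \<bullet> x / s" by simp
  then show ?thesis using s0 by (simp add: divide_le_cancel)
qed



lemma term_polyhedron:
  fixes A :: "real^'n^'m"
  assumes "finite Dt"
  shows "polyhedron (term_poly A b Dt)"
proof -
  have e: "term_poly A b Dt = \<Inter>(range (\<lambda>i. {x. b$i \<le> A$i \<bullet> x})) \<inter> \<Inter>((\<lambda>p. {x. snd p \<le> fst p \<bullet> x}) ` Dt)"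
    by (auto simp: term_poly_def polyhedron_of_def matrix_mult_dot; force)
  show ?thesis unfolding e
    by (intro polyhedron_Int polyhedron_Inter finite_imageI assms finite) (auto intro: polyhedron_halfspace_ge)
qed

lemma ray_convex: "convex {c *\<^sub>R v | c::real. c \<ge> 0}"
  unfolding convex_def
proof (intro ballI allI impI)
  fix p q and u w :: real assume p: "p \<in> {c *\<^sub>R v | c::real. c \<ge> 0}" and q: "q \<in> {c *\<^sub>R v | c::real. c \<ge> 0}"
    and uv: "0 \<le> u" "0 \<le> w" "u + w = 1"
  obtain c1 where c1: "0 \<le> c1" "p = c1 *\<^sub>R v" using p by blast
  obtain c2 where c2: "0 \<le> c2" "q = c2 *\<^sub>R v" using q by blast
  have "u *\<^sub>R p + w *\<^sub>R q = (u * c1 + w * c2) *\<^sub>R v" using c1 c2 by (simp add: algebra_simps)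
  moreover have "0 \<le> u * c1 + w * c2" using uv c1 c2 by simp
  ultimately show "u *\<^sub>R p + w *\<^sub>R q \<in> {c *\<^sub>R v | c::real. c \<ge> 0}" by blast
qed

lemma ray_no_neg:
  assumes "extreme_ray_of v C" "- v \<in> C"
  shows False
proof -
  have v0: "v \<noteq> 0" and vC: "v \<in> C" and fc: "{c *\<^sub>R v | c::real. c \<ge> 0} face_of C"
    using assms(1) unfolding extreme_ray_of_def by auto
  have "- v \<noteq> v"
  proof
    assume "- v = v"
    then have "(2::real) *\<^sub>R v = 0" by (metis scaleR_2 right_minus)
    with v0 show False by simp
  qed
  moreover have "(0::'a) = (1 - 1/2) *\<^sub>R (- v) + (1/2) *\<^sub>R v" by simp
  ultimately have "0 \<in> open_segment (- v) v" unfolding in_segment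
    by (intro conjI exI[of _ "1/2"]) auto
  moreover have "0 \<in> {c *\<^sub>R v | c::real. c \<ge> 0}" by (intro CollectI exI[of _ 0]) simp
  ultimately have "- v \<in> {c *\<^sub>R v | c::real. c \<ge> 0}" using fc assms(2) vC unfolding face_of_def by blast
  then obtain c :: real where c: "0 \<le> c" "- v = c *\<^sub>R v" by blast
  then have "(c + 1) *\<^sub>R v = 0" by (metis add.commute scaleR_add_left scaleR_one right_minus)
  with c(1) v0 show False by simp
qed

lemma hyp_prop:
  fixes \<alpha> \<gamma> :: "'a::real_inner"
  assumes a0: "\<alpha> \<noteq> 0" and h: "\<And>x. \<alpha> \<bullet> x = \<beta> \<Longrightarrow> \<gamma> \<bullet> x = \<delta>"
  shows "\<exists>k. \<gamma> = k *\<^sub>R \<alpha> \<and> \<delta> = k * \<beta>"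
proof -
  have aa: "\<alpha> \<bullet> \<alpha> \<noteq> 0" using a0 by simp
  define x0 where "x0 = (\<beta> / (\<alpha> \<bullet> \<alpha>)) *\<^sub>R \<alpha>"
  have ax0: "\<alpha> \<bullet> x0 = \<beta>" using aa by (simp add: x0_def)
  have gx0: "\<gamma> \<bullet> x0 = \<delta>" using h ax0 by blast
  have orth: "\<And>y. \<alpha> \<bullet> y = 0 \<Longrightarrow> \<gamma> \<bullet> y = 0"
  proof -
    fix y assume "\<alpha> \<bullet> y = 0"
    then have "\<alpha> \<bullet> (x0 + y) = \<beta>" using ax0 by (simp add: inner_add_right)
    then have "\<gamma> \<bullet> (x0 + y) = \<delta>" by (rule h)
    then show "\<gamma> \<bullet> y = 0" using gx0 by (simp add: inner_add_right)
  qed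
  define k where "k = (\<gamma> \<bullet> \<alpha>) / (\<alpha> \<bullet> \<alpha>)"
  define y where "y = \<gamma> - k *\<^sub>R \<alpha>"
  have "\<alpha> \<bullet> y = 0" using aa by (simp add: y_def k_def inner_diff_right inner_commute)
  then have gy: "\<gamma> \<bullet> y = 0" and ay: "\<alpha> \<bullet> y = 0" using orth by auto
  have "y \<bullet> y = \<gamma> \<bullet> y - k * (\<alpha> \<bullet> y)" by (simp add: y_def inner_diff_left)
  then have "y \<bullet> y = 0" using gy ay by simp
  then have "y = 0" by simp
  then have g: "\<gamma> = k *\<^sub>R \<alpha>" by (simp add: y_def)
  have "\<delta> = k * \<beta>" using gx0 ax0 g by simp
  with g show ?thesis by blast
qed



lemma midpt:
  fixes x y :: "'a::real_vector"
  shows "x = (1 - 1/2) *\<^sub>R (x - y) + (1/2) *\<^sub>R (x + y)"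
proof -
  have "(1 - 1/2) *\<^sub>R (x - y) + (1/2) *\<^sub>R (x + y) = ((1/2) + (1/2::real)) *\<^sub>R x"
    by (simp only: scaleR_diff_right scaleR_add_right scaleR_add_left) (simp add: algebra_simps)
  then show ?thesis by simp
qed

theorem corollary3:
  fixes A :: "real^'n^'m" and b :: "real^'m" and I :: "'n set"
    and T :: "'t set" and D :: "'t \<Rightarrow> ((real^'n) \<times> real) set"
    and R :: "'t \<Rightarrow> (real^'n) set"
  assumes rational_A: "\<forall>i j. A $ i $ j \<in> \<rat>"
    and rational_b: "\<forall>i. b $ i \<in> \<rat>"
    and full_dim: "aff_dim (polyhedron_of A b) = int CARD('n)"
    and pointed: "\<exists>v. v extreme_point_of (polyhedron_of A b)"
    and finite_T: "finite T"
    and finite_D: "\<forall>t\<in>T. finite (D t)"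
    and valid_disj: "mixed_int_hull A b I \<subseteq> disj_hull A b T D"
    and rays: "\<forall>t\<in>T. complete_extreme_rays (term_poly A b (D t)) (R t)"
  shows "proper (Pstar A b T D) (\<Union>t\<in>T. R t) (mixed_int_hull A b I)
    \<and> (\<forall>\<alpha> \<beta>. extreme_ray_of (\<alpha>, \<beta>) (prlp_cone (Pstar A b T D) (\<Union>t\<in>T. R t)) \<and> \<alpha> \<noteq> 0
          \<longrightarrow> facet_ineq \<alpha> \<beta> (disj_hull A b T D))
    \<and> (aff_dim (disj_hull A b T D) = int CARD('n) \<longrightarrow>
        (\<forall>\<alpha> \<beta>. facet_ineq \<alpha> \<beta> (disj_hull A b T D)
          \<longrightarrow> (\<alpha>, \<beta>) \<in> prlp_cone (Pstar A b T D) (\<Union>t\<in>T. R t)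
            \<and> extreme_ray_of (\<alpha>, \<beta>) (prlp_cone (Pstar A b T D) (\<Union>t\<in>T. R t))))"
proof -
  obtain v0 where pv: "v0 extreme_point_of polyhedron_of A b" using pointed by blast
  define PD where "PD = disj_hull A b T D"
  define V where "V = Pstar A b T D"
  define Rs where "Rs = (\<Union>t\<in>T. R t)"
  define K where "K = prlp_cone V Rs"
  have PDe: "PD = closure (convex hull (\<Union>t\<in>T. term_poly A b (D t)))"
    unfolding PD_def disj_hull_def ..
  have termsub: "\<And>t. t\<in>T \<Longrightarrow> term_poly A b (D t) \<subseteq> PD"
  proof -
    fix t assume t: "t \<in> T"
    have "term_poly A b (D t) \<subseteq> (\<Union>t\<in>T. term_poly A b (D t))" using t by blast
    also have "\<dots> \<subseteq> convex hull (\<Union>t\<in>T. term_poly A b (D t))" by (rule hull_subset)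
    also have "\<dots> \<subseteq> PD" unfolding PDe by (rule closure_subset)
    finally show "term_poly A b (D t) \<subseteq> PD" .
  qed
  have cvPD: "convex PD" unfolding PDe by simp
  have clPD: "closed PD" unfolding PDe by simp
  have Vsub: "V \<subseteq> PD"
  proof
    fix p assume "p \<in> V"
    then obtain t where t: "t \<in> T" "p extreme_point_of term_poly A b (D t)" unfolding V_def Pstar_def by blast
    then have "p \<in> term_poly A b (D t)" by (simp add: extreme_point_of_def)
    then show "p \<in> PD" using termsub[OF t(1)] by blast
  qed
  have Rsd: "\<And>r. r \<in> Rs \<Longrightarrow> \<exists>t\<in>T. extreme_dir (term_poly A b (D t)) r"
    using rays unfolding Rs_def complete_extreme_rays_def by blast
  have valid: "\<And>\<alpha> \<beta>. (\<alpha>,\<beta>) \<in> K \<Longrightarrow> \<forall>x\<in>PD. \<beta> \<le> \<alpha> \<bullet> x"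
  proof -
    fix \<alpha> \<beta> assume ab: "(\<alpha>,\<beta>) \<in> K"
    have hv: "(\<Union>t\<in>T. term_poly A b (D t)) \<subseteq> {x. \<beta> \<le> \<alpha> \<bullet> x}"
    proof
      fix x assume "x \<in> (\<Union>t\<in>T. term_poly A b (D t))"
      then obtain t where t: "t \<in> T" "x \<in> term_poly A b (D t)" by blast
      have "\<beta> \<le> \<alpha> \<bullet> x"
      proof (rule minkowski_valid[OF pv _ _ _ t(2)])
        show "complete_extreme_rays (term_poly A b (D t)) (R t)" using rays t(1) by blast
        show "\<And>e. e extreme_point_of term_poly A b (D t) \<Longrightarrow> \<beta> \<le> \<alpha> \<bullet> e"
          using ab t(1) unfolding K_def prlp_cone_def V_def Pstar_def by blast
        show "\<And>r. r \<in> R t \<Longrightarrow> 0 \<le> \<alpha> \<bullet> r"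
          using ab t(1) unfolding K_def prlp_cone_def Rs_def by blast
      qed
      then show "x \<in> {x. \<beta> \<le> \<alpha> \<bullet> x}" by simp
    qed
    have "convex hull (\<Union>t\<in>T. term_poly A b (D t)) \<subseteq> {x. \<beta> \<le> \<alpha> \<bullet> x}"
      by (rule hull_minimal[OF hv]) (use convex_halfspace_ge[of \<beta> \<alpha>] in simp)
    then have "PD \<subseteq> {x. \<beta> \<le> \<alpha> \<bullet> x}" unfolding PDe
      by (rule closure_minimal) (use closed_halfspace_ge[of \<beta> \<alpha>] in simp)
    then show "\<forall>x\<in>PD. \<beta> \<le> \<alpha> \<bullet> x" by blast
  qed
  have inK: "\<And>\<alpha> \<beta>. \<forall>x\<in>PD. \<beta> \<le> \<alpha> \<bullet> x \<Longrightarrow> (\<alpha>,\<beta>) \<in> K"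
  proof -
    fix \<alpha> \<beta> assume vv: "\<forall>x\<in>PD. \<beta> \<le> \<alpha> \<bullet> x"
    have "\<forall>p\<in>V. \<beta> \<le> \<alpha> \<bullet> p" using vv Vsub by blast
    moreover have "\<forall>r\<in>Rs. 0 \<le> \<alpha> \<bullet> r"
    proof
      fix r assume "r \<in> Rs"
      then obtain t where t: "t \<in> T" "extreme_dir (term_poly A b (D t)) r" using Rsd by blast
      then obtain x0 where x0: "x0 \<in> term_poly A b (D t)" unfolding extreme_dir_def by blast
      have rc: "r \<in> rec_cone (term_poly A b (D t))" using t(2) unfolding extreme_dir_def extreme_ray_of_def by blast
      show "0 \<le> \<alpha> \<bullet> r"
      proof (rule ray_aux[of \<beta> "\<alpha> \<bullet> x0"])
        fix c :: real assume "0 \<le> c"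
        then have "x0 + c *\<^sub>R r \<in> term_poly A b (D t)" using rc x0 unfolding rec_cone_def by blast
        then have "x0 + c *\<^sub>R r \<in> PD" using termsub[OF t(1)] by blast
        then have "\<beta> \<le> \<alpha> \<bullet> (x0 + c *\<^sub>R r)" using vv by blast
        then show "\<beta> \<le> \<alpha> \<bullet> x0 + c * (\<alpha> \<bullet> r)" by (simp add: inner_add_right)
      qed
    qed
    ultimately show "(\<alpha>,\<beta>) \<in> K" unfolding K_def prlp_cone_def by blast
  qed
  have recPD: "\<And>p r. p \<in> PD \<Longrightarrow> r \<in> Rs \<Longrightarrow> p + r \<in> PD"
  proof -
    fix p r assume p: "p \<in> PD" and r: "r \<in> Rs"
    then obtain t where t: "t \<in> T" "extreme_dir (term_poly A b (D t)) r" using Rsd by blast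
    then obtain x0 where x0: "x0 \<in> term_poly A b (D t)" unfolding extreme_dir_def by blast
    have rc: "r \<in> rec_cone (term_poly A b (D t))" using t(2) unfolding extreme_dir_def extreme_ray_of_def by blast
    have inPD: "\<And>c. 0 \<le> c \<Longrightarrow> x0 + c *\<^sub>R r \<in> PD"
      using rc x0 termsub[OF t(1)] unfolding rec_cone_def by blast
    define f where "f = (\<lambda>s::real. (1 - s) *\<^sub>R p + s *\<^sub>R x0 + r)"
    have ev: "eventually (\<lambda>s. f s \<in> PD) (at_right 0)"
    proof -
      have "eventually (\<lambda>s::real. 0 < s \<and> s < 1) (at_right 0)"
        using eventually_at_right_less[of 0] eventually_at_right_real[of 0 1]
        by (auto elim: eventually_elim2)
      then show ?thesis
      proof (rule eventually_mono)
        fix s :: real assume s: "0 < s \<and> s < 1"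
        have "x0 + (1/s) *\<^sub>R r \<in> PD" using inPD s by simp
        then have "(1 - s) *\<^sub>R p + s *\<^sub>R (x0 + (1/s) *\<^sub>R r) \<in> PD"
          using cvPD p s unfolding convex_def by simp
        moreover have "(1 - s) *\<^sub>R p + s *\<^sub>R (x0 + (1/s) *\<^sub>R r) = f s"
          using s by (simp add: f_def scaleR_add_right)
        ultimately show "f s \<in> PD" by simp
      qed
    qed
    have lim: "(f \<longlongrightarrow> p + r) (at_right 0)"
    proof -
      have "(f \<longlongrightarrow> f 0) (at_right 0)" unfolding f_def
        by (intro tendsto_intros)
      then show ?thesis by (simp add: f_def)
    qed
    show "p + r \<in> PD" by (rule Lim_in_closed_set[OF clPD ev _ lim]) simp
  qed
  have P1: "proper V Rs (mixed_int_hull A b I)"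
    unfolding proper_def
  proof (intro allI impI ballI)
    fix \<alpha> \<beta> x assume ab: "(\<alpha>, \<beta>) \<in> prlp_cone V Rs" and x: "x \<in> mixed_int_hull A b I"
    have "x \<in> PD" using x valid_disj PD_def by blast
    then show "\<beta> \<le> \<alpha> \<bullet> x" using valid[of \<alpha> \<beta>] ab K_def by blast
  qed
  have cardm1: "int DIM(real^'n) - 1 = int CARD('n) - 1" by simp
  have P2: "\<forall>\<alpha> \<beta>. extreme_ray_of (\<alpha>, \<beta>) K \<and> \<alpha> \<noteq> 0 \<longrightarrow> facet_ineq \<alpha> \<beta> PD"
  proof (intro allI impI, elim conjE)
    fix \<alpha> \<beta> assume er: "extreme_ray_of (\<alpha>, \<beta>) K" and an: "\<alpha> \<noteq> 0"
    let ?ray = "{c *\<^sub>R (\<alpha>,\<beta>) | c::real. c \<ge> 0}"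
    have vK: "(\<alpha>,\<beta>) \<in> K" and fc: "?ray face_of K" using er unfolding extreme_ray_of_def by auto
    have finV: "finite V" unfolding V_def Pstar_def
      using finite_T finite_D by (intro finite_UN_I finite_polyhedron_extreme_points term_polyhedron) auto
    have finRs: "finite Rs" unfolding Rs_def
      using finite_T rays unfolding complete_extreme_rays_def by blast
    define Tv where "Tv = {p\<in>V. \<alpha> \<bullet> p = \<beta>}"
    define Tr where "Tr = {r\<in>Rs. \<alpha> \<bullet> r = 0}"
    have vPD: "\<forall>x\<in>PD. \<beta> \<le> \<alpha> \<bullet> x" using valid vK by blast
    have slackV: "\<And>p. p \<in> V \<Longrightarrow> \<beta> \<le> \<alpha> \<bullet> p" using vK unfolding K_def prlp_cone_def by blast
    have slackR: "\<And>r. r \<in> Rs \<Longrightarrow> 0 \<le> \<alpha> \<bullet> r" using vK unfolding K_def prlp_cone_def by blast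
    have keyL: "\<And>\<gamma> \<delta>. (\<forall>p\<in>Tv. \<gamma> \<bullet> p = \<delta>) \<Longrightarrow> (\<forall>r\<in>Tr. \<gamma> \<bullet> r = 0) \<Longrightarrow> \<exists>k. (\<gamma>,\<delta>) = k *\<^sub>R (\<alpha>,\<beta>)"
    proof -
      fix \<gamma> \<delta> assume hv: "\<forall>p\<in>Tv. \<gamma> \<bullet> p = \<delta>" and hr: "\<forall>r\<in>Tr. \<gamma> \<bullet> r = 0"
      show "\<exists>k. (\<gamma>,\<delta>) = k *\<^sub>R (\<alpha>,\<beta>)"
      proof (cases "(\<gamma>,\<delta>) = 0")
        case True then show ?thesis by (intro exI[of _ 0]) (simp add: zero_prod_def)
      next
        case gd0: False
        have evV: "\<forall>p\<in>V. eventually (\<lambda>e::real. 0 \<le> (\<alpha> \<bullet> p - \<beta>) + e * (\<gamma> \<bullet> p - \<delta>) \<and> 0 \<le> (\<alpha> \<bullet> p - \<beta>) - e * (\<gamma> \<bullet> p - \<delta>)) (at_right 0)"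
        proof
          fix p assume p: "p \<in> V"
          show "eventually (\<lambda>e::real. 0 \<le> (\<alpha> \<bullet> p - \<beta>) + e * (\<gamma> \<bullet> p - \<delta>) \<and> 0 \<le> (\<alpha> \<bullet> p - \<beta>) - e * (\<gamma> \<bullet> p - \<delta>)) (at_right 0)"
          proof (cases "p \<in> Tv")
            case True
            then have "\<alpha> \<bullet> p - \<beta> = 0" "\<gamma> \<bullet> p - \<delta> = 0" using hv Tv_def by auto
            then show ?thesis by simp
          next
            case False
            then have pos: "0 < \<alpha> \<bullet> p - \<beta>" using slackV[OF p] p Tv_def by auto
            have t1: "((\<lambda>e::real. (\<alpha> \<bullet> p - \<beta>) + e * (\<gamma> \<bullet> p - \<delta>)) \<longlongrightarrow> (\<alpha> \<bullet> p - \<beta>) + 0 * (\<gamma> \<bullet> p - \<delta>)) (at_right 0)"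
              by (intro tendsto_intros)
            have t2: "((\<lambda>e::real. (\<alpha> \<bullet> p - \<beta>) - e * (\<gamma> \<bullet> p - \<delta>)) \<longlongrightarrow> (\<alpha> \<bullet> p - \<beta>) - 0 * (\<gamma> \<bullet> p - \<delta>)) (at_right 0)"
              by (intro tendsto_intros)
            have e1: "eventually (\<lambda>e::real. 0 < (\<alpha> \<bullet> p - \<beta>) + e * (\<gamma> \<bullet> p - \<delta>)) (at_right 0)"
              using order_tendstoD(1)[OF t1, of 0] pos by simp
            have e2: "eventually (\<lambda>e::real. 0 < (\<alpha> \<bullet> p - \<beta>) - e * (\<gamma> \<bullet> p - \<delta>)) (at_right 0)"
              using order_tendstoD(1)[OF t2, of 0] pos by simp
            show ?thesis using e1 e2 by (auto elim: eventually_elim2)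
          qed
        qed
        have evR: "\<forall>r\<in>Rs. eventually (\<lambda>e::real. 0 \<le> \<alpha> \<bullet> r + e * (\<gamma> \<bullet> r) \<and> 0 \<le> \<alpha> \<bullet> r - e * (\<gamma> \<bullet> r)) (at_right 0)"
        proof
          fix r assume r: "r \<in> Rs"
          show "eventually (\<lambda>e::real. 0 \<le> \<alpha> \<bullet> r + e * (\<gamma> \<bullet> r) \<and> 0 \<le> \<alpha> \<bullet> r - e * (\<gamma> \<bullet> r)) (at_right 0)"
          proof (cases "r \<in> Tr")
            case True
            then have "\<alpha> \<bullet> r = 0" "\<gamma> \<bullet> r = 0" using hr Tr_def by auto
            then show ?thesis by simp
          next
            case False
            then have pos: "0 < \<alpha> \<bullet> r" using slackR[OF r] r Tr_def by auto
            have t1: "((\<lambda>e::real. \<alpha> \<bullet> r + e * (\<gamma> \<bullet> r)) \<longlongrightarrow> \<alpha> \<bullet> r + 0 * (\<gamma> \<bullet> r)) (at_right 0)"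
              by (intro tendsto_intros)
            have t2: "((\<lambda>e::real. \<alpha> \<bullet> r - e * (\<gamma> \<bullet> r)) \<longlongrightarrow> \<alpha> \<bullet> r - 0 * (\<gamma> \<bullet> r)) (at_right 0)"
              by (intro tendsto_intros)
            have e1: "eventually (\<lambda>e::real. 0 < \<alpha> \<bullet> r + e * (\<gamma> \<bullet> r)) (at_right 0)"
              using order_tendstoD(1)[OF t1, of 0] pos by simp
            have e2: "eventually (\<lambda>e::real. 0 < \<alpha> \<bullet> r - e * (\<gamma> \<bullet> r)) (at_right 0)"
              using order_tendstoD(1)[OF t2, of 0] pos by simp
            show ?thesis using e1 e2 by (auto elim: eventually_elim2)
          qed
        qed
        have evall: "eventually (\<lambda>e::real. 0 < e \<and>
            (\<forall>p\<in>V. 0 \<le> (\<alpha> \<bullet> p - \<beta>) + e * (\<gamma> \<bullet> p - \<delta>) \<and> 0 \<le> (\<alpha> \<bullet> p - \<beta>) - e * (\<gamma> \<bullet> p - \<delta>)) \<and>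
            (\<forall>r\<in>Rs. 0 \<le> \<alpha> \<bullet> r + e * (\<gamma> \<bullet> r) \<and> 0 \<le> \<alpha> \<bullet> r - e * (\<gamma> \<bullet> r))) (at_right 0)"
          by (rule eventually_mono[OF eventually_conj[OF eventually_at_right_less[of "0::real"]
                eventually_conj[OF eventually_ball_finite[OF finV evV] eventually_ball_finite[OF finRs evR]]]]) auto
        obtain e :: real where e: "0 < e"
            "\<forall>p\<in>V. 0 \<le> (\<alpha> \<bullet> p - \<beta>) + e * (\<gamma> \<bullet> p - \<delta>) \<and> 0 \<le> (\<alpha> \<bullet> p - \<beta>) - e * (\<gamma> \<bullet> p - \<delta>)"
            "\<forall>r\<in>Rs. 0 \<le> \<alpha> \<bullet> r + e * (\<gamma> \<bullet> r) \<and> 0 \<le> \<alpha> \<bullet> r - e * (\<gamma> \<bullet> r)"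
          using eventually_happens[OF evall] by auto
        define z1 where "z1 = (\<alpha> + e *\<^sub>R \<gamma>, \<beta> + e * \<delta>)"
        define z2 where "z2 = (\<alpha> - e *\<^sub>R \<gamma>, \<beta> - e * \<delta>)"
        have z1K: "z1 \<in> K"
        proof -
          have "\<forall>p\<in>V. \<beta> + e * \<delta> \<le> (\<alpha> + e *\<^sub>R \<gamma>) \<bullet> p"
          proof
            fix p assume "p \<in> V"
            then have "0 \<le> (\<alpha> \<bullet> p - \<beta>) + e * (\<gamma> \<bullet> p - \<delta>)" using e(2) by blast
            then show "\<beta> + e * \<delta> \<le> (\<alpha> + e *\<^sub>R \<gamma>) \<bullet> p" by (simp add: inner_add_left algebra_simps)
          qed
          moreover have "\<forall>r\<in>Rs. 0 \<le> (\<alpha> + e *\<^sub>R \<gamma>) \<bullet> r"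
          proof
            fix r assume "r \<in> Rs"
            then have "0 \<le> \<alpha> \<bullet> r + e * (\<gamma> \<bullet> r)" using e(3) by blast
            then show "0 \<le> (\<alpha> + e *\<^sub>R \<gamma>) \<bullet> r" by (simp add: inner_add_left)
          qed
          ultimately show ?thesis unfolding z1_def K_def prlp_cone_def by simp
        qed
        have z2K: "z2 \<in> K"
        proof -
          have "\<forall>p\<in>V. \<beta> - e * \<delta> \<le> (\<alpha> - e *\<^sub>R \<gamma>) \<bullet> p"
          proof
            fix p assume "p \<in> V"
            then have "0 \<le> (\<alpha> \<bullet> p - \<beta>) - e * (\<gamma> \<bullet> p - \<delta>)" using e(2) by blast
            then show "\<beta> - e * \<delta> \<le> (\<alpha> - e *\<^sub>R \<gamma>) \<bullet> p" by (simp add: inner_diff_left algebra_simps)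
          qed
          moreover have "\<forall>r\<in>Rs. 0 \<le> (\<alpha> - e *\<^sub>R \<gamma>) \<bullet> r"
          proof
            fix r assume "r \<in> Rs"
            then have "0 \<le> \<alpha> \<bullet> r - e * (\<gamma> \<bullet> r)" using e(3) by blast
            then show "0 \<le> (\<alpha> - e *\<^sub>R \<gamma>) \<bullet> r" by (simp add: inner_diff_left)
          qed
          ultimately show ?thesis unfolding z2_def K_def prlp_cone_def by simp
        qed
        have z1e: "z1 = (\<alpha>,\<beta>) + e *\<^sub>R (\<gamma>,\<delta>)" by (simp add: z1_def)
        have z2e: "z2 = (\<alpha>,\<beta>) - e *\<^sub>R (\<gamma>,\<delta>)" by (simp add: z2_def)
        have "z2 \<noteq> z1"
        proof
          assume "z2 = z1"
          then have eq1: "\<alpha> - e *\<^sub>R \<gamma> = \<alpha> + e *\<^sub>R \<gamma>" and eq2: "\<beta> - e * \<delta> = \<beta> + e * \<delta>"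
            unfolding z1_def z2_def by auto
          have "(\<alpha> - e *\<^sub>R \<gamma>) \<bullet> \<gamma> = (\<alpha> + e *\<^sub>R \<gamma>) \<bullet> \<gamma>" by (simp only: eq1)
          then have "e * (\<gamma> \<bullet> \<gamma>) = 0" by (simp add: inner_diff_left inner_add_left)
          then have g0: "\<gamma> = 0" using e(1) by simp
          have d0: "\<delta> = 0" using eq2 e(1) by simp
          show False using gd0 g0 d0 by (simp add: zero_prod_def)
        qed
        moreover have "(\<alpha>,\<beta>) = (1 - 1/2) *\<^sub>R z2 + (1/2) *\<^sub>R z1"
          unfolding z1e z2e by (rule midpt)
        ultimately have "(\<alpha>,\<beta>) \<in> open_segment z2 z1" unfolding in_segment
          by (intro conjI exI[of _ "1/2"]) auto
        moreover have "(\<alpha>,\<beta>) \<in> ?ray" by (intro CollectI exI[of _ 1]) simp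
        ultimately have "z1 \<in> ?ray" using fc z1K z2K unfolding face_of_def by blast
        then obtain c where c: "z1 = c *\<^sub>R (\<alpha>,\<beta>)" by blast
        then have "e *\<^sub>R (\<gamma>,\<delta>) = (c - 1) *\<^sub>R (\<alpha>,\<beta>)" unfolding z1e by (simp add: algebra_simps)
        then have "(1/e) *\<^sub>R (e *\<^sub>R (\<gamma>,\<delta>)) = ((c - 1)/e) *\<^sub>R (\<alpha>,\<beta>)" by simp
        then have "(\<gamma>,\<delta>) = ((c - 1)/e) *\<^sub>R (\<alpha>,\<beta>)" using e(1) by simp
        then show ?thesis by blast
      qed
    qed
    have Tvne: "Tv \<noteq> {}"
    proof
      assume "Tv = {}"
      then obtain k where "((0::real^'n), (1::real)) = k *\<^sub>R (\<alpha>,\<beta>)" using keyL[of 0 1] by auto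
      then have "k *\<^sub>R \<alpha> = 0" "k * \<beta> = 1" by auto
      then show False using an by auto
    qed
    then obtain p0 where p0: "p0 \<in> Tv" by blast
    define F where "F = {x \<in> PD. \<alpha> \<bullet> x = \<beta>}"
    have Fface: "F face_of PD"
    proof -
      have "PD \<inter> {x. \<alpha> \<bullet> x = \<beta>} face_of PD"
        by (rule face_of_Int_supporting_hyperplane_ge[OF cvPD]) (use vPD in blast)
      moreover have "PD \<inter> {x. \<alpha> \<bullet> x = \<beta>} = F" unfolding F_def by blast
      ultimately show ?thesis by simp
    qed
    have TvF: "Tv \<subseteq> F" using Vsub unfolding Tv_def F_def by blast
    have p0F: "p0 \<in> F" using p0 TvF by blast
    have TrF: "\<And>r. r \<in> Tr \<Longrightarrow> p0 + r \<in> F"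
    proof -
      fix r assume r: "r \<in> Tr"
      have "p0 + r \<in> PD" using recPD p0F r unfolding F_def Tr_def by blast
      moreover have "\<alpha> \<bullet> (p0 + r) = \<beta>" using p0F r unfolding F_def Tr_def by (simp add: inner_add_right)
      ultimately show "p0 + r \<in> F" unfolding F_def by blast
    qed
    have affF: "affine hull F = {x. \<alpha> \<bullet> x = \<beta>}"
    proof
      show "affine hull F \<subseteq> {x. \<alpha> \<bullet> x = \<beta>}"
        by (rule hull_minimal) (auto simp: F_def affine_hyperplane)
      show "{x. \<alpha> \<bullet> x = \<beta>} \<subseteq> affine hull F"
      proof (rule ccontr)
        assume "\<not> {x. \<alpha> \<bullet> x = \<beta>} \<subseteq> affine hull F"
        then obtain q where q: "\<alpha> \<bullet> q = \<beta>" "q \<notin> affine hull F" by blast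
        have "\<exists>a cc. a \<bullet> q < cc \<and> (\<forall>x\<in>affine hull F. a \<bullet> x > cc)"
          by (rule separating_hyperplane_closed_point[OF affine_imp_convex[OF affine_affine_hull] closed_affine_hull q(2)])
        then obtain a cc where ac: "a \<bullet> q < cc" "\<forall>x\<in>affine hull F. cc < a \<bullet> x" by blast
        have p0M: "p0 \<in> affine hull F" by (rule hull_inc[OF p0F])
        have const: "\<And>x. x \<in> affine hull F \<Longrightarrow> a \<bullet> x = a \<bullet> p0"
        proof -
          fix x assume xM: "x \<in> affine hull F"
          have mem: "\<And>t. (1 - t) *\<^sub>R p0 + t *\<^sub>R x \<in> affine hull F"
            using affine_affine_hull[of F] p0M xM unfolding affine_alt by blast
          have lin: "\<And>t. a \<bullet> ((1 - t) *\<^sub>R p0 + t *\<^sub>R x) = a \<bullet> p0 + t * (a \<bullet> x - a \<bullet> p0)"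
            by (simp add: inner_add_right algebra_simps)
          have d1: "0 \<le> a \<bullet> x - a \<bullet> p0"
          proof (rule ray_aux[of cc "a \<bullet> p0"])
            fix t :: real assume "0 \<le> t"
            show "cc \<le> a \<bullet> p0 + t * (a \<bullet> x - a \<bullet> p0)" using ac(2) mem[of t] lin[of t] by force
          qed
          have d2: "0 \<le> - (a \<bullet> x - a \<bullet> p0)"
          proof (rule ray_aux[of cc "a \<bullet> p0"])
            fix t :: real assume "0 \<le> t"
            have "cc \<le> a \<bullet> p0 + (-t) * (a \<bullet> x - a \<bullet> p0)" using ac(2) mem[of "-t"] lin[of "-t"] by force
            then show "cc \<le> a \<bullet> p0 + t * - (a \<bullet> x - a \<bullet> p0)" by (simp add: algebra_simps)
          qed
          show "a \<bullet> x = a \<bullet> p0" using d1 d2 by simp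
        qed
        have h1: "\<forall>p\<in>Tv. a \<bullet> p = a \<bullet> p0"
        proof
          fix p assume "p \<in> Tv"
          then have "p \<in> F" using TvF by blast
          then have "p \<in> affine hull F" by (rule hull_inc)
          then show "a \<bullet> p = a \<bullet> p0" by (rule const)
        qed
        have h2: "\<forall>r\<in>Tr. a \<bullet> r = 0"
        proof
          fix r assume "r \<in> Tr"
          then have "p0 + r \<in> affine hull F" by (rule hull_inc[OF TrF])
          then have "a \<bullet> (p0 + r) = a \<bullet> p0" by (rule const)
          then show "a \<bullet> r = 0" by (simp add: inner_add_right)
        qed
        obtain k where k: "(a, a \<bullet> p0) = k *\<^sub>R (\<alpha>,\<beta>)" using keyL[OF h1 h2] by blast
        then have "a = k *\<^sub>R \<alpha>" "a \<bullet> p0 = k * \<beta>" by auto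
        then have "a \<bullet> q = a \<bullet> p0" using q(1) by (simp only: inner_scaleR_left)
        moreover have "cc < a \<bullet> p0" using ac(2) p0M by blast
        ultimately show False using ac(1) by simp
      qed
    qed
    have dimF: "aff_dim F = int CARD('n) - 1"
    proof -
      have "aff_dim F = aff_dim (affine hull F)" by simp
      also have "\<dots> = int DIM(real^'n) - 1" unfolding affF using an by simp
      finally show ?thesis by simp
    qed
    have FPD: "F \<subseteq> PD" unfolding F_def by blast
    have dimPD: "aff_dim PD = int CARD('n)"
    proof (rule ccontr)
      assume ne: "aff_dim PD \<noteq> int CARD('n)"
      have "aff_dim PD \<le> int DIM(real^'n)" by (rule aff_dim_le_DIM)
      then have le: "aff_dim PD \<le> int CARD('n)" by simp
      have "aff_dim F \<le> aff_dim PD" by (rule aff_dim_subset[OF FPD])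
      then have eqd: "aff_dim (affine hull F) = aff_dim (affine hull PD)" using le ne dimF by simp
      have "affine hull F = affine hull PD"
        by (rule affine_dim_equal[OF affine_affine_hull affine_affine_hull _ hull_mono[OF FPD] eqd])
           (use hull_inc[OF p0F] in blast)
      then have "PD \<subseteq> {x. \<alpha> \<bullet> x = \<beta>}" using affF hull_subset[of PD affine] by blast
      then have "\<forall>x\<in>PD. - \<beta> \<le> (- \<alpha>) \<bullet> x" by auto
      then have "(-\<alpha>, -\<beta>) \<in> K" by (rule inK)
      then have "- (\<alpha>,\<beta>) \<in> K" by simp
      then show False using ray_no_neg[OF er] by blast
    qed
    show "facet_ineq \<alpha> \<beta> PD"
      unfolding facet_ineq_def facet_of_def
      using vPD Fface p0F dimF dimPD unfolding F_def[symmetric] by auto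
  qed
  have P3: "aff_dim PD = int CARD('n) \<longrightarrow>
        (\<forall>\<alpha> \<beta>. facet_ineq \<alpha> \<beta> PD \<longrightarrow> (\<alpha>, \<beta>) \<in> K \<and> extreme_ray_of (\<alpha>, \<beta>) K)"
  proof (intro impI allI)
    assume fullPD: "aff_dim PD = int CARD('n)"
    fix \<alpha> \<beta> assume fi: "facet_ineq \<alpha> \<beta> PD"
    define F where "F = {x \<in> PD. \<alpha> \<bullet> x = \<beta>}"
    have vPD: "\<forall>x\<in>PD. \<beta> \<le> \<alpha> \<bullet> x" and ff: "F facet_of PD" using fi unfolding facet_ineq_def F_def by auto
    have Fne: "F \<noteq> {}" and dimF: "aff_dim F = int CARD('n) - 1" using ff fullPD unfolding facet_of_def by auto
    have abK: "(\<alpha>,\<beta>) \<in> K" using inK vPD by blast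
    have an: "\<alpha> \<noteq> 0"
    proof
      assume a0: "\<alpha> = 0"
      then have "\<beta> = 0" using Fne unfolding F_def by auto
      then have "F = PD" unfolding F_def using a0 by auto
      then show False using dimF fullPD by simp
    qed
    have affF: "affine hull F = {x. \<alpha> \<bullet> x = \<beta>}"
    proof (rule affine_dim_equal[OF affine_affine_hull affine_hyperplane])
      show "affine hull F \<noteq> {}" using Fne by simp
      show "affine hull F \<subseteq> {x. \<alpha> \<bullet> x = \<beta>}"
        by (rule hull_minimal) (auto simp: F_def affine_hyperplane)
      show "aff_dim (affine hull F) = aff_dim {x. \<alpha> \<bullet> x = \<beta>}" using dimF an by simp
    qed
    obtain x1 where x1: "x1 \<in> PD" "\<beta> < \<alpha> \<bullet> x1"
    proof (rule ccontr)
      assume "\<not> thesis"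
      then have "\<forall>x\<in>PD. \<alpha> \<bullet> x = \<beta>" using that vPD by force
      then have "PD \<subseteq> {x. \<alpha> \<bullet> x = \<beta>}" by blast
      then have "aff_dim PD \<le> aff_dim {x. \<alpha> \<bullet> x = \<beta>}" by (rule aff_dim_subset)
      then show False using fullPD an by simp
    qed
    let ?ray = "{c *\<^sub>R (\<alpha>,\<beta>) | c::real. c \<ge> 0}"
    have tight: "\<And>\<gamma> \<delta>. (\<gamma>,\<delta>) \<in> K \<Longrightarrow> (\<forall>x\<in>F. \<gamma> \<bullet> x = \<delta>) \<Longrightarrow> (\<gamma>,\<delta>) \<in> ?ray"
    proof -
      fix \<gamma> \<delta> assume gK: "(\<gamma>,\<delta>) \<in> K" and gF: "\<forall>x\<in>F. \<gamma> \<bullet> x = \<delta>"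
      have "affine hull F \<subseteq> {x. \<gamma> \<bullet> x = \<delta>}"
        by (rule hull_minimal) (use gF affine_hyperplane in auto)
      then have "\<And>x. \<alpha> \<bullet> x = \<beta> \<Longrightarrow> \<gamma> \<bullet> x = \<delta>" using affF by blast
      then obtain k where k: "\<gamma> = k *\<^sub>R \<alpha>" "\<delta> = k * \<beta>" using hyp_prop[OF an] by blast
      have "\<delta> \<le> \<gamma> \<bullet> x1" using valid[OF gK] x1(1) by blast
      then have "0 \<le> k * (\<alpha> \<bullet> x1 - \<beta>)" using k by (simp add: algebra_simps)
      then have "0 \<le> k" using x1(2) by (simp add: zero_le_mult_iff)
      then show "(\<gamma>,\<delta>) \<in> ?ray" using k by (intro CollectI exI[of _ k]) simp
    qed
    have "?ray face_of K"
      unfolding face_of_def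
    proof (intro conjI)
      show "?ray \<subseteq> K"
      proof
        fix z assume "z \<in> ?ray"
        then obtain c :: real where c: "0 \<le> c" "z = c *\<^sub>R (\<alpha>,\<beta>)" by blast
        have "\<forall>x\<in>PD. c * \<beta> \<le> (c *\<^sub>R \<alpha>) \<bullet> x" using vPD c(1) by (simp add: mult_left_mono)
        then have "(c *\<^sub>R \<alpha>, c * \<beta>) \<in> K" by (rule inK)
        then show "z \<in> K" using c by simp
      qed
      show "convex ?ray" by (rule ray_convex)
      show "\<forall>a1\<in>K. \<forall>a2\<in>K. \<forall>p\<in>?ray. p \<in> open_segment a1 a2 \<longrightarrow> a1 \<in> ?ray \<and> a2 \<in> ?ray"
      proof (intro ballI impI)
        fix a1 a2 p assume a1: "a1 \<in> K" and a2: "a2 \<in> K" and p: "p \<in> ?ray" and seg: "p \<in> open_segment a1 a2"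
        obtain c0 :: real where c0: "0 \<le> c0" "p = c0 *\<^sub>R (\<alpha>,\<beta>)" using p by blast
        obtain u where u: "a1 \<noteq> a2" "0 < u" "u < 1" "p = (1-u) *\<^sub>R a1 + u *\<^sub>R a2"
          using seg unfolding in_segment by blast
        obtain \<gamma>1 \<delta>1 where g1: "a1 = (\<gamma>1,\<delta>1)" by (cases a1)
        obtain \<gamma>2 \<delta>2 where g2: "a2 = (\<gamma>2,\<delta>2)" by (cases a2)
        have fsteq: "(1-u) *\<^sub>R \<gamma>1 + u *\<^sub>R \<gamma>2 = c0 *\<^sub>R \<alpha>" and sndeq: "(1-u) * \<delta>1 + u * \<delta>2 = c0 * \<beta>"
          using u(4) c0(2) g1 g2 by auto
        have v1: "\<forall>x\<in>PD. \<delta>1 \<le> \<gamma>1 \<bullet> x" using valid a1 g1 by blast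
        have v2: "\<forall>x\<in>PD. \<delta>2 \<le> \<gamma>2 \<bullet> x" using valid a2 g2 by blast
        have both: "\<forall>x\<in>F. \<gamma>1 \<bullet> x = \<delta>1 \<and> \<gamma>2 \<bullet> x = \<delta>2"
        proof
          fix x assume xF: "x \<in> F"
          then have xPD: "x \<in> PD" and ax: "\<alpha> \<bullet> x = \<beta>" unfolding F_def by auto
          have "(1-u) * (\<gamma>1 \<bullet> x) + u * (\<gamma>2 \<bullet> x) = c0 * (\<alpha> \<bullet> x)"
            using arg_cong[OF fsteq, of "\<lambda>y. y \<bullet> x"] by (simp add: inner_add_left)
          then have sum0: "(1-u) * (\<gamma>1 \<bullet> x - \<delta>1) + u * (\<gamma>2 \<bullet> x - \<delta>2) = 0"
            using sndeq ax by (simp add: algebra_simps)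
          have n1: "0 \<le> (1-u) * (\<gamma>1 \<bullet> x - \<delta>1)" using v1 xPD u by simp
          have n2: "0 \<le> u * (\<gamma>2 \<bullet> x - \<delta>2)" using v2 xPD u by simp
          have "(1-u) * (\<gamma>1 \<bullet> x - \<delta>1) = 0" "u * (\<gamma>2 \<bullet> x - \<delta>2) = 0" using sum0 n1 n2 by linarith+
          then show "\<gamma>1 \<bullet> x = \<delta>1 \<and> \<gamma>2 \<bullet> x = \<delta>2" using u by simp
        qed
        show "a1 \<in> ?ray \<and> a2 \<in> ?ray"
          using tight[of \<gamma>1 \<delta>1] tight[of \<gamma>2 \<delta>2] a1 a2 g1 g2 both by blast
      qed
    qed
    then have "extreme_ray_of (\<alpha>,\<beta>) K"
      unfolding extreme_ray_of_def using abK an by (simp add: zero_prod_def)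
    then show "(\<alpha>,\<beta>) \<in> K \<and> extreme_ray_of (\<alpha>, \<beta>) K" using abK by blast
  qed
  show ?thesis using P1 P2 P3 unfolding PD_def V_def Rs_def K_def by blast
qed


end
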